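(* Let $S$ be a set of $9$ points of $PG(3,2)$ which is a strong blocking set, i.e. for every plane $\sigma$ of $PG(3,2)$ the points of $\sigma\cap S$ span $\sigma$. Then: (i) every plane $\pi$ of $PG(3,2)$ contains at most $5$ points of $S$; (ii) if a plane $\pi$ contains a line $\ell$ all of whose points lie in $S$, then $\pi$ contains exactly $5$ points of $S$, and these $5$ points form two lines (each entirely contained in $S$) meeting in a point.
   Context: $PG(3,2)$ is the $3$-dimensional projective space over $\mathbb{F}_2$ (15 points, each line has 3 points, each plane has 7 points). A strong blocking set in $PG(3,2)$ is a set of points $S$ such that for every plane (hyperplane) $\sigma$, the span $\langle \sigma\cap S\rangle$ equals $\sigma$. The minimum possible size of a strong blocking set in $PG(3,2)$ is $9$; a strong blocking set of size $9$ is called a minimal strong blocking set. A "line of $S$" means a projective line all of whose points belong to $S$. *)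

theory Defs
  imports "HOL-Analysis.Analysis" "HOL-Library.Z2"
begin

text \<open>PG(3,2): points are the nonzero vectors of GF(2)^4 (type bit ^ 4, where
  bit is the two-element field from HOL-Library.Z2).\<close>

definition pg_points :: "(bit ^ 4) set" where
  "pg_points = {x. x \<noteq> 0}"

definition gf2_dot :: "bit ^ 4 \<Rightarrow> bit ^ 4 \<Rightarrow> bit" where
  "gf2_dot a x = (\<Sum>i\<in>UNIV. a $ i * x $ i)"

definition pg_plane :: "(bit ^ 4) set \<Rightarrow> bool" where
  "pg_plane P \<longleftrightarrow> (\<exists>a. a \<noteq> 0 \<and> P = {x. x \<noteq> 0 \<and> gf2_dot a x = 0})"

definition pg_line :: "(bit ^ 4) set \<Rightarrow> bool" where
  "pg_line L \<longleftrightarrow> (\<exists>u v. u \<noteq> 0 \<and> v \<noteq> 0 \<and> u \<noteq> v \<and> L = {u, v, u + v})"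

definition pg_span :: "(bit ^ 4) set \<Rightarrow> (bit ^ 4) set" where
  "pg_span T = module.span ((*s)) T - {0}"

definition strong_blocking_set :: "(bit ^ 4) set \<Rightarrow> bool" where
  "strong_blocking_set S \<longleftrightarrow> S \<subseteq> pg_points \<and>
     (\<forall>\<sigma>. pg_plane \<sigma> \<longrightarrow> pg_span (\<sigma> \<inter> S) = \<sigma>)"

end

theory Submission
  imports Defs
begin

definition mk :: "bool \<Rightarrow> bool \<Rightarrow> bool \<Rightarrow> bool \<Rightarrow> bit^4" where
  "mk a b c d = (\<chi> i. of_bool (if i = 1 then a else if i = 2 then b else if i = 3 then c else d))"

lemma mk_nth[simp]: "mk a b c d $ 1 = of_bool a" "mk a b c d $ 2 = of_bool b"
  "mk a b c d $ 3 = of_bool c" "mk a b c d $ 4 = of_bool d"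
  by (simp_all add: mk_def)

lemma of_bool_bit_eq[simp]: "(of_bool p :: bit) = of_bool q \<longleftrightarrow> p = q"
  by (cases p; cases q; simp)

lemma mk_eq[simp]: "mk a b c d = mk a' b' c' d' \<longleftrightarrow> a = a' \<and> b = b' \<and> c = c' \<and> d = d'"
  by (auto simp: vec_eq_iff forall_4)

lemma mk_zero[simp]: "mk a b c d = 0 \<longleftrightarrow> \<not>a \<and> \<not>b \<and> \<not>c \<and> \<not>d"
  by (auto simp: vec_eq_iff forall_4)

lemma bit_of_bool_cases: "(x::bit) = of_bool (x = 1)"
  by (cases x) auto

lemma mk_surj: "x = mk (x$1 = 1) (x$2 = 1) (x$3 = 1) (x$4 = 1)"
  by (simp add: vec_eq_iff forall_4 bit_of_bool_cases[symmetric])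

lemma all_vec: "(\<forall>x::bit^4. P x) \<longleftrightarrow> (\<forall>a b c d. P (mk a b c d))"
  by (metis mk_surj)

lemma ex_vec: "(\<exists>x::bit^4. P x) \<longleftrightarrow> (\<exists>a b c d. P (mk a b c d))"
  by (metis mk_surj)

lemma of_bool_xor: "(of_bool p :: bit) + of_bool q = of_bool (p \<noteq> q)"
  by (cases p; cases q; simp)
lemma of_bool_and: "(of_bool p :: bit) * of_bool q = of_bool (p \<and> q)"
  by (cases p; cases q; simp)

lemma dot_mk[simp]: "gf2_dot (mk a b c d) (mk x y z w) =
   of_bool ((((a \<and> x) \<noteq> (b \<and> y)) \<noteq> (c \<and> z)) \<noteq> (d \<and> w))"
  unfolding gf2_dot_def sum_4 by (simp only: mk_nth of_bool_and of_bool_xor add.assoc)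

lemma add_mk[simp]: "mk a b c d + mk x y z w = mk (a \<noteq> x) (b \<noteq> y) (c \<noteq> z) (d \<noteq> w)"
  by (simp add: vec_eq_iff forall_4 of_bool_xor[symmetric])

lemma of_bool_bit0[simp]: "(of_bool p :: bit) = 0 \<longleftrightarrow> \<not> p" by (cases p) auto

lemma test: "\<forall>a b. a \<noteq> 0 \<longrightarrow> b \<noteq> 0 \<longrightarrow> a \<noteq> b \<longrightarrow> (\<exists>x. x \<noteq> 0 \<and> gf2_dot a x = 0 \<and> gf2_dot b x \<noteq> 0)"
  unfolding all_vec ex_vec by (simp only: all_bool_eq ex_bool_eq mk_eq mk_zero dot_mk of_bool_bit0 simp_thms)

lemma UNIV_vec: "(UNIV::(bit^4) set) = {mk False False False False, mk False False False True, mk False False True False, mk False False True True, mk False True False False, mk False True False True, mk False True True False, mk False True True True, mk True False False False, mk True False False True, mk True False True False, mk True False True True, mk True True False False, mk True True False True, mk True True True False, mk True True True True}"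
proof -
  { have "\<forall>x. x \<in> {mk False False False False, mk False False False True, mk False False True False, mk False False True True, mk False True False False, mk False True False True, mk False True True False, mk False True True True, mk True False False False, mk True False False True, mk True False True False, mk True False True True, mk True True False False, mk True True False True, mk True True True False, mk True True True True}"
      unfolding all_vec by (simp only: all_bool_eq insert_iff mk_eq empty_iff simp_thms) }
  then show ?thesis by blast
qed

lemma fin_vec: "finite (UNIV::(bit^4) set)"
  by (simp only: UNIV_vec finite_insert finite.emptyI)

lemma card_expand: "card {x::bit^4. P x} = (\<Sum>x\<in>{mk False False False False, mk False False False True, mk False False True False, mk False False True True, mk False True False False, mk False True False True, mk False True True False, mk False True True True, mk True False False False, mk True False False True, mk True False True False, mk True False True True, mk True True False False, mk True True False True, mk True True True False, mk True True True True}. of_bool (P x)::nat)"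
proof -
  have "card {x::bit^4. P x} = (\<Sum>x\<in>UNIV. of_bool (P x)::nat)"
    by (subst sum_of_bool_eq) (simp_all add: fin_vec)
  then show ?thesis by (simp only: UNIV_vec)
qed


lemma card_expand_int: "int (card {x::bit^4. P x}) = (\<Sum>x\<in>{mk False False False False, mk False False False True, mk False False True False, mk False False True True, mk False True False False, mk False True False True, mk False True True False, mk False True True True, mk True False False False, mk True False False True, mk True False True False, mk True False True True, mk True True False False, mk True True False True, mk True True True False, mk True True True True}. of_bool (P x)::int)"
proof -
  have "int (card {x::bit^4. P x}) = (\<Sum>x\<in>UNIV. of_bool (P x)::int)"
    by (subst sum_of_bool_eq) (simp_all add: fin_vec)
  then show ?thesis by (simp only: UNIV_vec)
qed


lemmas ev = all_bool_eq ex_bool_eq mk_eq mk_zero dot_mk of_bool_bit0 simp_thms add_mk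
   sum.insert finite_insert finite.emptyI insert_iff empty_iff sum.empty mem_Collect_eq if_True if_False add_0 add_0_right

lemma F1: "\<forall>a. a \<noteq> 0 \<longrightarrow> (\<exists>w. gf2_dot a w \<noteq> 0)"
  unfolding all_vec ex_vec by (simp only: ev)

lemma F2: "\<forall>x. x \<noteq> 0 \<longrightarrow> card {a. a \<noteq> 0 \<and> gf2_dot a x = 0} = 7"
  unfolding all_vec card_expand by (simp only: ev) simp

lemma F3: "\<forall>x y. x \<noteq> 0 \<longrightarrow> y \<noteq> 0 \<longrightarrow> x \<noteq> y \<longrightarrow> card {a. a \<noteq> 0 \<and> gf2_dot a x = 0 \<and> gf2_dot a y = 0} = 3"
  unfolding all_vec card_expand by (simp only: ev) simp

lemma F4: "card {a::bit^4. a \<noteq> 0} = 15"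
  unfolding card_expand by (simp only: ev) simp


lemma bit_add_self: "(c::bit) + c = 0"
  by (cases c) simp_all

lemma vadd_self[simp]: "(x::bit^4) + x = 0"
  by (simp add: vec_eq_iff)

lemma vadd_cancel: "(x::bit^4) + (x + y) = y"
  by (simp only: add.assoc[symmetric] vadd_self add_0)

lemma vadd_cancel2: "(x::bit^4) + y + y = x"
  by (simp only: add.assoc vadd_self add_0_right)

lemma dot_comm: "gf2_dot a x = gf2_dot x a"
  unfolding gf2_dot_def by (simp only: mult.commute)

lemma dot_add: "gf2_dot a (x + y) = gf2_dot a x + gf2_dot a y"
  unfolding gf2_dot_def by (simp only: vector_add_component distrib_left sum.distrib)

lemma dot_add_left: "gf2_dot (a + b) x = gf2_dot a x + gf2_dot b x"
  using dot_add dot_comm by metis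

lemma dot_smult: "gf2_dot a (c *s x) = c * gf2_dot a x"
  unfolding gf2_dot_def by (simp only: vector_smult_component sum_distrib_left mult.left_commute)

lemma dot_zero: "gf2_dot a 0 = 0"
  unfolding gf2_dot_def by simp

lemma sub3: assumes "finite T" "card T \<le> 3" shows "\<exists>x y z. T \<subseteq> {x,y,z}"
proof -
  obtain xs where xs: "set xs = T" "distinct xs" using finite_distinct_list[OF assms(1)] by blast
  have len: "length xs \<le> 3" using xs assms(2) distinct_card by fastforce
  have "T \<subseteq> {xs!0, xs!1, xs!2}"
  proof
    fix t assume "t \<in> T"
    then obtain i where i: "i < length xs" "xs!i = t" using xs(1) in_set_conv_nth by metis
    with len have "i = 0 \<or> i = 1 \<or> i = 2" by auto
    thus "t \<in> {xs!0, xs!1, xs!2}" using i by auto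
  qed
  thus ?thesis by blast
qed

lemma sub2: assumes "finite T" "card T \<le> 2" shows "\<exists>x y. T \<subseteq> {x,y}"
proof -
  obtain xs where xs: "set xs = T" "distinct xs" using finite_distinct_list[OF assms(1)] by blast
  have len: "length xs \<le> 2" using xs assms(2) distinct_card by fastforce
  have "T \<subseteq> {xs!0, xs!1}"
  proof
    fix t assume "t \<in> T"
    then obtain i where i: "i < length xs" "xs!i = t" using xs(1) in_set_conv_nth by metis
    with len have "i = 0 \<or> i = 1" by auto
    thus "t \<in> {xs!0, xs!1}" using i by auto
  qed
  thus ?thesis by blast
qed

lemma kern3: "\<exists>b::bit^4. b \<noteq> 0 \<and> gf2_dot b x = 0 \<and> gf2_dot b y = 0 \<and> gf2_dot b z = 0"
proof -
  define f where "f = (\<lambda>b::bit^4. (gf2_dot b x, gf2_dot b y, gf2_dot b z))"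
  have UB: "(UNIV::bit set) = {0,1}" using bit.exhaust by auto
  have finB: "finite (UNIV::(bit\<times>bit\<times>bit) set)"
    by (simp only: UNIV_Times_UNIV[symmetric] UB finite_cartesian_product finite_insert finite.emptyI)
  have cU: "card (UNIV::(bit\<times>bit\<times>bit) set) = 8"
    by (simp only: UNIV_Times_UNIV[symmetric] UB card_cartesian_product) simp
  have c16: "card (UNIV::(bit^4) set) = 16"
    by (simp only: UNIV_vec) simp
  have "\<not> inj f"
  proof
    assume "inj f"
    have "card (UNIV::(bit^4) set) \<le> card (UNIV::(bit\<times>bit\<times>bit) set)"
      by (rule card_inj_on_le[OF \<open>inj f\<close> _ finB]) simp
    thus False using cU c16 by simp
  qed
  then obtain b1 b2 where b: "b1 \<noteq> b2" "f b1 = f b2" unfolding inj_def by blast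
  have "b1 + b2 \<noteq> 0"
  proof
    assume "b1 + b2 = 0"
    hence "b1 + b2 + b2 = b2" by simp
    thus False using b(1) vadd_cancel2 by metis
  qed
  moreover have "gf2_dot (b1 + b2) x = 0" "gf2_dot (b1 + b2) y = 0" "gf2_dot (b1 + b2) z = 0"
    using b(2) unfolding f_def dot_add_left by (auto simp del: add_bit_eq_xor simp add: bit_add_self)
  ultimately show ?thesis by blast
qed


lemma vadd_cancel': "(y::bit^4) + (x + y) = x"
  by (metis add.commute vadd_cancel)

lemma lsolve: "(x::bit^4) + y = z \<longleftrightarrow> x = z + y"
  by (metis vadd_cancel2)

lemma H1_of_sbs:
  assumes "strong_blocking_set S" "a \<noteq> 0" "b \<noteq> 0" "a \<noteq> b"
  shows "\<exists>x. x \<in> S \<and> gf2_dot a x = 0 \<and> gf2_dot b x \<noteq> 0"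
proof (rule ccontr)
  assume N: "\<not> ?thesis"
  define P where "P = {x::bit^4. x \<noteq> 0 \<and> gf2_dot a x = 0}"
  have pl: "pg_plane P" unfolding pg_plane_def P_def using assms(2) by blast
  have sp: "pg_span (P \<inter> S) = P" using assms(1) pl unfolding strong_blocking_set_def by blast
  have sub: "P \<inter> S \<subseteq> {x. gf2_dot b x = 0}" using N unfolding P_def by auto
  have ss: "vec.subspace {x::bit^4. gf2_dot b x = 0}"
    unfolding vec.subspace_def by (simp add: dot_add dot_smult dot_zero)
  have "vec.span (P \<inter> S) \<subseteq> {x. gf2_dot b x = 0}" by (rule vec.span_minimal[OF sub ss])
  hence "P \<subseteq> {x. gf2_dot b x = 0}" using sp unfolding pg_span_def by blast
  moreover obtain x where "x \<noteq> 0" "gf2_dot a x = 0" "gf2_dot b x \<noteq> 0" using test assms by blast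
  ultimately show False unfolding P_def by blast
qed

theorem lemma2p1:
  fixes S :: "(bit ^ 4) set"
  assumes "strong_blocking_set S"
    and "card S = 9"
  shows "(\<forall>\<pi>. pg_plane \<pi> \<longrightarrow> card (\<pi> \<inter> S) \<le> 5)
       \<and> (\<forall>\<pi> l. pg_plane \<pi> \<and> pg_line l \<and> l \<subseteq> \<pi> \<and> l \<subseteq> S \<longrightarrow>
            card (\<pi> \<inter> S) = 5 \<and>
            (\<exists>l1 l2. pg_line l1 \<and> pg_line l2 \<and> l1 \<noteq> l2 \<and> l1 \<subseteq> S \<and> l2 \<subseteq> S \<and>
                card (l1 \<inter> l2) = 1 \<and> \<pi> \<inter> S = l1 \<union> l2))"
proof -
  have S0: "0 \<notin> S" using assms(1) unfolding strong_blocking_set_def pg_points_def by auto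
  have finS: "finite S" using assms(2) by (metis card.infinite zero_neq_numeral)
  have H1: "\<exists>x. x \<in> S \<and> gf2_dot a x = 0 \<and> gf2_dot b x \<noteq> 0" if "a \<noteq> 0" "b \<noteq> 0" "a \<noteq> b" for a b
    using H1_of_sbs[OF assms(1) that] .
  define k where "k a = card {x\<in>S. gf2_dot a x = 0}" for a
  have finT: "finite {x\<in>S. P x}" for P using finS by simp
  have low: "k a \<ge> 3" if a: "a \<noteq> 0" for a
  proof (rule ccontr)
    assume "\<not> 3 \<le> k a"
    then have "card {x\<in>S. gf2_dot a x = 0} \<le> 2" unfolding k_def by simp
    then obtain x y where T: "{x\<in>S. gf2_dot a x = 0} \<subseteq> {x,y}" using sub2[OF finT[of "\<lambda>x. gf2_dot a x = 0"]] by blast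
    obtain w where w: "gf2_dot a w \<noteq> 0" using F1 a by blast
    obtain b where b: "b \<noteq> 0" "gf2_dot b x = 0" "gf2_dot b y = 0" "gf2_dot b w = 0" using kern3 by blast
    have "b \<noteq> a" using w b by auto
    then obtain t where "t \<in> S" "gf2_dot a t = 0" "gf2_dot b t \<noteq> 0" using H1[OF a b(1)] by metis
    with T b show False by auto
  qed
  have Rne: "\<exists>x\<in>S. gf2_dot a x \<noteq> 0" if a: "a \<noteq> 0" for a
  proof -
    obtain c where c: "c \<noteq> 0" "c \<noteq> a"
    proof (cases "a = mk True False False False")
      case True
      show ?thesis by (rule that[of "mk False True False False"]) (simp_all add: True)
    next
      case False
      show ?thesis by (rule that[of "mk True False False False"]) (use False in auto)
    qed
    show ?thesis using H1[OF c(1) a c(2)] by blast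
  qed
  have up: "k a \<le> 5" if a: "a \<noteq> 0" for a
  proof (rule ccontr)
    assume ka: "\<not> k a \<le> 5"
    define R where "R = {x\<in>S. gf2_dot a x \<noteq> 0}"
    have "S = {x\<in>S. gf2_dot a x = 0} \<union> R" unfolding R_def by auto
    moreover have "{x\<in>S. gf2_dot a x = 0} \<inter> R = {}" unfolding R_def by auto
    ultimately have "card S = k a + card R" unfolding k_def R_def
      using card_Un_disjoint[OF finT[of "\<lambda>x. gf2_dot a x = 0"] finT[of "\<lambda>x. gf2_dot a x \<noteq> 0"]] by simp
    hence "card R \<le> 3" using ka assms(2) by simp
    then obtain x y z where R: "R \<subseteq> {x,y,z}" using sub3[OF finT[of "\<lambda>x. gf2_dot a x \<noteq> 0"]] unfolding R_def by blast
    obtain b0 where b0: "b0 \<noteq> 0" "gf2_dot b0 x = 0" "gf2_dot b0 y = 0" "gf2_dot b0 z = 0"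
      using kern3 by blast
    show False
    proof (cases "b0 = a")
      case True
      obtain t where "t \<in> S" "gf2_dot a t \<noteq> 0" using Rne a by blast
      hence "t \<in> R" unfolding R_def by simp
      with R b0 True \<open>gf2_dot a t \<noteq> 0\<close> show False by auto
    next
      case False
      define b where "b = b0 + a"
      have "b \<noteq> 0"
      proof
        assume "b = 0"
        hence "b0 + a + a = a" unfolding b_def by simp
        thus False using False vadd_cancel2 by metis
      qed
      moreover have "b \<noteq> a" unfolding b_def using b0(1) by simp
      ultimately obtain t where t: "t \<in> S" "gf2_dot b t = 0" "gf2_dot a t \<noteq> 0"
        using H1[OF _ a] by metis
      hence "t \<in> R" unfolding R_def by simp
      hence "gf2_dot b0 t = 0" using R b0 by auto
      hence "gf2_dot b t = gf2_dot a t" unfolding b_def dot_add_left by simp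
      with t show False by simp
    qed
  qed
  define A where "A = {a::bit^4. a \<noteq> 0}"
  have finA: "finite A" using finite_subset[OF subset_UNIV fin_vec] .
  have cA: "card A = 15" using F4 unfolding A_def .
  have kint: "int (k a) = (\<Sum>x\<in>S. of_bool (gf2_dot a x = 0))" for a
  proof -
    have "(\<Sum>x\<in>S. of_bool (gf2_dot a x = 0)) = int (card (S \<inter> {x. gf2_dot a x = 0}))"
      by (rule sum_of_bool_eq[OF finS finS])
    moreover have "S \<inter> {x. gf2_dot a x = 0} = {x\<in>S. gf2_dot a x = 0}" by auto
    ultimately show ?thesis unfolding k_def by simp
  qed
  have cnt1: "(\<Sum>a\<in>A. of_bool (gf2_dot a x = 0)) = (7::int)" if "x \<in> S" for x
  proof -
    have x0: "x \<noteq> 0" using that S0 by auto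
    have "(\<Sum>a\<in>A. of_bool (gf2_dot a x = 0)) = int (card (A \<inter> {a. gf2_dot a x = 0}))"
      by (rule sum_of_bool_eq[OF finA finA])
    moreover have "A \<inter> {a. gf2_dot a x = 0} = {a. a \<noteq> 0 \<and> gf2_dot a x = 0}" unfolding A_def by auto
    ultimately show ?thesis using F2 x0 by simp
  qed
  have cnt2: "(\<Sum>a\<in>A. of_bool (gf2_dot a x = 0 \<and> gf2_dot a y = 0)) = (if x = y then 7 else (3::int))"
    if "x \<in> S" "y \<in> S" for x y
  proof (cases "x = y")
    case True
    then show ?thesis using cnt1[OF that(1)] by simp
  next
    case False
    have x0: "x \<noteq> 0" "y \<noteq> 0" using that S0 by auto
    have "(\<Sum>a\<in>A. of_bool (gf2_dot a x = 0 \<and> gf2_dot a y = 0)) = int (card (A \<inter> {a. gf2_dot a x = 0 \<and> gf2_dot a y = 0}))"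
      by (rule sum_of_bool_eq[OF finA finA])
    moreover have "A \<inter> {a. gf2_dot a x = 0 \<and> gf2_dot a y = 0} = {a. a \<noteq> 0 \<and> gf2_dot a x = 0 \<and> gf2_dot a y = 0}" unfolding A_def by auto
    ultimately show ?thesis using F3 x0 False by simp
  qed
  have E1: "(\<Sum>a\<in>A. int (k a)) = 63"
  proof -
    have "(\<Sum>a\<in>A. int (k a)) = (\<Sum>a\<in>A. \<Sum>x\<in>S. of_bool (gf2_dot a x = 0))" by (simp only: kint)
    also have "\<dots> = (\<Sum>x\<in>S. \<Sum>a\<in>A. of_bool (gf2_dot a x = 0))" by (rule sum.swap)
    also have "\<dots> = (\<Sum>x\<in>S. 7)" by (rule sum.cong[OF refl]) (rule cnt1)
    also have "\<dots> = 63" using assms(2) by simp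
    finally show ?thesis .
  qed
  have row: "(\<Sum>y\<in>S. (if x = y then 7 else (3::int))) = 31" if "x \<in> S" for x
  proof -
    have "(\<Sum>y\<in>S. (if x = y then 7 else (3::int))) = (\<Sum>y\<in>S. 3 + (if x = y then 4 else 0))"
      by (rule sum.cong) auto
    also have "\<dots> = 3 * 9 + 4" using finS that assms(2) by (simp add: sum.distrib)
    finally show ?thesis by simp
  qed
  have E2: "(\<Sum>a\<in>A. int (k a) * int (k a)) = 279"
  proof -
    have "(\<Sum>a\<in>A. int (k a) * int (k a)) = (\<Sum>a\<in>A. \<Sum>x\<in>S. \<Sum>y\<in>S. of_bool (gf2_dot a x = 0 \<and> gf2_dot a y = 0))"
      by (simp only: kint sum_product of_bool_conj)
    also have "\<dots> = (\<Sum>x\<in>S. \<Sum>a\<in>A. \<Sum>y\<in>S. of_bool (gf2_dot a x = 0 \<and> gf2_dot a y = 0))" by (rule sum.swap)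
    also have "\<dots> = (\<Sum>x\<in>S. \<Sum>y\<in>S. \<Sum>a\<in>A. of_bool (gf2_dot a x = 0 \<and> gf2_dot a y = 0))"
      by (rule sum.cong[OF refl]) (rule sum.swap)
    also have "\<dots> = (\<Sum>x\<in>S. \<Sum>y\<in>S. (if x = y then 7 else (3::int)))"
      by (intro sum.cong refl) (simp add: cnt2)
    also have "\<dots> = (\<Sum>x\<in>S. 31)" by (rule sum.cong[OF refl]) (rule row)
    also have "\<dots> = 279" using assms(2) by simp
    finally show ?thesis .
  qed
  have Z: "(\<Sum>a\<in>A. (int (k a) - 3) * (int (k a) - 5)) = 0"
  proof -
    have "(\<Sum>a\<in>A. (int (k a) - 3) * (int (k a) - 5)) = (\<Sum>a\<in>A. int (k a) * int (k a) - 8 * int (k a) + 15)"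
      by (rule sum.cong) (simp_all add: algebra_simps)
    also have "\<dots> = (\<Sum>a\<in>A. int (k a) * int (k a)) - 8 * (\<Sum>a\<in>A. int (k a)) + 15 * int (card A)"
      by (simp add: sum.distrib sum_subtractf sum_distrib_left)
    also have "\<dots> = 0" using E1 E2 cA by simp
    finally show ?thesis .
  qed
  have no4: "k a \<noteq> 4" if a: "a \<noteq> 0" for a
  proof
    assume k4: "k a = 4"
    have nn: "0 \<le> - ((int (k b) - 3) * (int (k b) - 5))" if "b \<in> A" for b
    proof -
      have "b \<noteq> 0" using that A_def by auto
      then have "k b = 3 \<or> k b = 4 \<or> k b = 5" using low up by force
      then show ?thesis by auto
    qed
    have "(\<Sum>b\<in>A. - ((int (k b) - 3) * (int (k b) - 5))) = 0" using Z by (simp add: sum_negf)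
    moreover have "(\<Sum>b\<in>A. - ((int (k b) - 3) * (int (k b) - 5))) = 0 \<longleftrightarrow> (\<forall>b\<in>A. - ((int (k b) - 3) * (int (k b) - 5)) = 0)"
      by (rule sum_nonneg_eq_0_iff[OF finA]) (rule nn)
    ultimately have "\<forall>b\<in>A. - ((int (k b) - 3) * (int (k b) - 5)) = 0" by blast
    moreover have "a \<in> A" using a A_def by auto
    ultimately show False using k4 by auto
  qed
  show ?thesis
  proof (rule conjI; intro allI impI)
    fix \<pi> assume "pg_plane \<pi>"
    then obtain a where a: "a \<noteq> 0" "\<pi> = {x. x \<noteq> 0 \<and> gf2_dot a x = 0}" unfolding pg_plane_def by blast
    have "\<pi> \<inter> S = {x\<in>S. gf2_dot a x = 0}" using a S0 by auto
    thus "card (\<pi> \<inter> S) \<le> 5" using up[OF a(1)] unfolding k_def by simp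
  next
    fix \<pi> l assume H: "pg_plane \<pi> \<and> pg_line l \<and> l \<subseteq> \<pi> \<and> l \<subseteq> S"
    then obtain a where a: "a \<noteq> 0" "\<pi> = {x. x \<noteq> 0 \<and> gf2_dot a x = 0}" unfolding pg_plane_def by blast
    have PS: "\<pi> \<inter> S = {x\<in>S. gf2_dot a x = 0}" using a S0 by auto
    obtain u v where uv: "u \<noteq> 0" "v \<noteq> 0" "u \<noteq> v" "l = {u, v, u+v}" using H unfolding pg_line_def by blast
    have lS: "u \<in> S" "v \<in> S" "u + v \<in> S" using H uv(4) by auto
    have la: "gf2_dot a u = 0" "gf2_dot a v = 0" using H uv(4) a(2) by auto
    have uv0: "u + v \<noteq> u" "u + v \<noteq> v" "u + v \<noteq> 0"
      using uv(1,2) apply simp_all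
      using uv(3) by (subst lsolve) simp
    have cl: "card l = 3" using uv uv0 by auto
    have finl: "finite l" using uv(4) by simp
    have lT: "l \<subseteq> \<pi> \<inter> S" using H by auto
    have finPS: "finite (\<pi> \<inter> S)" using finS by simp
    have k5: "k a = 5"
    proof -
      have "k a \<noteq> 3"
      proof
        assume "k a = 3"
        hence "card (\<pi> \<inter> S) = 3" using PS unfolding k_def by simp
        hence Teq: "l = \<pi> \<inter> S" using card_subset_eq[OF finPS lT] cl by simp
        obtain w where w: "gf2_dot a w \<noteq> 0" using F1 a by blast
        obtain b where b: "b \<noteq> 0" "gf2_dot b u = 0" "gf2_dot b v = 0" "gf2_dot b w = 0"
          using kern3 by blast
        have "b \<noteq> a" using w b by auto
        then obtain t where t: "t \<in> S" "gf2_dot a t = 0" "gf2_dot b t \<noteq> 0"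
          using H1[OF a(1) b(1)] by metis
        have "t \<in> \<pi> \<inter> S" using t PS by auto
        hence "t \<in> l" using Teq by simp
        hence "gf2_dot b t = 0" using b uv(4) dot_add by auto
        with t show False by simp
      qed
      thus ?thesis using low[OF a(1)] up[OF a(1)] no4[OF a(1)] by simp
    qed
    have c5: "card (\<pi> \<inter> S) = 5" using PS k5 unfolding k_def by simp
    have "card ((\<pi> \<inter> S) - l) = 2" using card_Diff_subset[OF finl lT] c5 cl by simp
    then obtain p q where pq: "(\<pi> \<inter> S) - l = {p,q}" "p \<noteq> q" by (meson card_2_iff)
    have pm: "p \<in> \<pi> \<inter> S - l" "q \<in> \<pi> \<inter> S - l" using pq(1) by blast+
    have p: "p \<in> S" "p \<notin> l" "p \<noteq> 0" "gf2_dot a p = 0" using pm(1) unfolding a(2) by auto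
    have q: "q \<in> S" "q \<notin> l" "q \<noteq> 0" "gf2_dot a q = 0" using pm(2) unfolding a(2) by auto
    define X where "X = {p, p+u, p+v, p+(u+v)}"
    have pnot: "p \<noteq> u" "p \<noteq> v" "p \<noteq> u + v" using p(2) uv(4) by auto
    have Xsub: "X \<subseteq> \<pi> - l"
    proof -
      have "p + u \<noteq> 0" "p + v \<noteq> 0" "p + (u + v) \<noteq> 0" using pnot by (subst lsolve, simp)+
      moreover have "gf2_dot a (p + u) = 0" "gf2_dot a (p + v) = 0" "gf2_dot a (p + (u + v)) = 0"
        using p(4) la by (simp_all only: dot_add add_0)
      moreover have "p + u \<notin> l" "p + v \<notin> l" "p + (u + v) \<notin> l"
      proof -
        have "p + u \<noteq> u" "p + u \<noteq> v" "p + u \<noteq> u + v"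
          using p(3) pnot apply simp
          using pnot apply (subst lsolve, simp add: add.commute)
          using pnot by (simp add: add.commute[of u v])
        moreover have "p + v \<noteq> u" "p + v \<noteq> v" "p + v \<noteq> u + v"
          using pnot apply (subst lsolve, simp add: add.commute)
          using p(3) apply simp
          using pnot by simp
        moreover have "p + (u + v) \<noteq> u" "p + (u + v) \<noteq> v" "p + (u + v) \<noteq> u + v"
          using pnot apply (subst lsolve, simp add: vadd_cancel)
          using pnot apply (subst lsolve, simp add: vadd_cancel')
          using p(3) by simp
        ultimately show "p + u \<notin> l" "p + v \<notin> l" "p + (u + v) \<notin> l" using uv(4) by auto
      qed
      ultimately show ?thesis unfolding X_def using p a(2) by auto
    qed
    have cX: "card X = 4" unfolding X_def using uv uv0 by simp
    have finP: "finite \<pi>" using finite_subset[OF subset_UNIV fin_vec] .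
    have cP: "card \<pi> = 7"
    proof -
      have "\<pi> = {x. x \<noteq> 0 \<and> gf2_dot x a = 0}" using a(2) dot_comm by auto
      thus ?thesis using F2 a(1) by simp
    qed
    have lP: "l \<subseteq> \<pi>" using H by blast
    have "card (\<pi> - l) = 4" using card_Diff_subset[OF finl lP] cP cl by simp
    hence Xeq: "X = \<pi> - l" using card_subset_eq[OF _ Xsub] finP cX by simp
    have "q \<in> \<pi> - l" using pq(1) by blast
    hence "q \<in> {p+u, p+v, p+(u+v)}" using Xeq pq(2) unfolding X_def by auto
    hence pql: "p + q \<in> l" using uv(4) by (auto simp: vadd_cancel)
    define l2 where "l2 = {p, q, p + q}"
    have L2: "pg_line l2" unfolding pg_line_def l2_def using p q pq(2) by blast
    have L1: "pg_line l" using H by blast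
    have ne: "l \<noteq> l2" using p(2) unfolding l2_def by auto
    have l2S: "l2 \<subseteq> S" unfolding l2_def using p q pql H by auto
    have int1: "l \<inter> l2 = {p + q}" unfolding l2_def using p(2) q(2) pql by auto
    have un: "\<pi> \<inter> S = l \<union> l2" unfolding l2_def using pq(1) lT pql by auto
    show "card (\<pi> \<inter> S) = 5 \<and>
            (\<exists>l1 l2. pg_line l1 \<and> pg_line l2 \<and> l1 \<noteq> l2 \<and> l1 \<subseteq> S \<and> l2 \<subseteq> S \<and>
                card (l1 \<inter> l2) = 1 \<and> \<pi> \<inter> S = l1 \<union> l2)"
      using c5 L1 L2 ne H l2S int1 un by (intro conjI exI[of _ l] exI[of _ l2]) auto
  qed
qed

end
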